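(* Assume (H1), (H2) and (H3) from the context hold. Then $\mathcal{T}:\mathcal{A}\to\mathcal{E}_\varrho$ is continuous with respect to the weighted norm $\|\cdot\|_\varrho$.
   Context: Let $N\ge1$ and $D=\mathrm{diag}(d_1,\dots,d_N)$ with $d_i>0$. Vector inequalities are componentwise; $u\gg0$ means all components positive; $[0,r]=\{u:0\le u\le r\}$; $\mathcal{C}_r$ is the set of continuous $\mathbb{R}\to[0,r]$ maps. (H1) - $k^+\gg0$; $f:[0,k^+]\to\mathbb{R}^N$ is continuous and piecewise twice continuously differentiable; solutions of $u_t=Du_{xx}+f(u)$ with data in $\mathcal{C}_{k^+}$ exist globally in $\mathcal{C}_{k^+}$. - $0\ll k^-\le k\le k^+$; continuous piecewise $C^2$ maps $f^\pm:[0,k^\pm]\to\mathbb{R}^N$ satisfy $f^-\le f\le f^+$ on $[0,k^+]$. - $f(0)=f(k)=0$, $f^\pm(0)=f^\pm(k^\pm)=0$, with no other positive equilibria between $0$ and $k$, respectively $k^\pm$. - $f^\pm$ are cooperative on $[0,k^\pm]$ and share with $f$ the Jacobian $f'(0)$ at $0$. (H2) - $A_\lambda=(a^{ij}_\lambda)=\mathrm{diag}(d_i\lambda^2)+f'(0)$ is block lower triangular for $\lambda>0$, with irreducible or $1\times1$ zero diagonal blocks. - Its first block has positive principal eigenvalue $\Psi(A_\lambda)$ (where $\Psi(A)=\rho(A+\alpha I)-\alpha$), strictly larger than those of the other blocks. - An eigenvector $\nu_\lambda=(\nu^i_\lambda)\gg0$ for $\Psi(A_\lambda)$ exists and is continuous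 in $\lambda$. Speeds. $\Phi(\lambda)=\Psi(A_\lambda)/\lambda$ and $c^*=\inf_{\lambda>0}\Phi$. (H3) $f^\pm(\alpha\nu_\lambda)\le\alpha f'(0)\nu_\lambda$ for all $\alpha,\lambda>0$. Setup. Fix $c>c^*$, and let $\Lambda_c$ be the smallest positive solution of $\Phi(\lambda)=c$. The operator $\mathcal{T}$. $\beta>\max\{|\partial_if_j(u)|:u\in[0,k^+]\}$ is a fixed, sufficiently large constant. Set $\lambda_{1i}=\frac{-c+\sqrt{c^2+4\beta d_i}}{2d_i}$ and $\lambda_{2i}=\frac{c+\sqrt{c^2+4\beta d_i}}{2d_i}$, with $\lambda_{2i}>\lambda_{1i}>2\Lambda_c$. Let $H_i(u)=\beta u_i+f_i(u)$ and $$\mathcal{T}_i[u](\xi)=\frac{1}{d_i(\lambda_{1i}+\lambda_{2i})}\Big(\int_{-\infty}^{\xi}e^{-\lambda_{1i}(\xi-s)}H_i(u(s))ds+\int_{\xi}^{\infty}e^{\lambda_{2i}(\xi-s)}H_i(u(s))ds\Big).$$ The functions $\phi^\pm$. $\phi^+_i(\xi)=\min\{k_i,\nu^i_{\Lambda_c}e^{\Lambda_c\xi}\}$ and $\phi^-_i(\xi)=\max\{0,\nu^i_{\Lambda_c}e^{\Lambda_c\xi}-q\nu^i_{\gamma\Lambda_c}e^{\gamma\Lambda_c\xi}\}$, with fixed $\gamma\in(1,2)$ and $q>1$ large enough that $\phi^-<\phi^+$. The space $\mathcal{A}$. Fix $0<\varrho<\Lambda_c$. $\mathcal{E}_\varrho$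 is the Banach space of continuous $u:\mathbb{R}\to\mathbb{R}^N$ with $\|u\|_\varrho=\sum_i\sup_\xi|u_i(\xi)|e^{-\varrho\xi}<\infty$, and $\mathcal{A}=\{u\in\mathcal{E}_\varrho:\phi^-\le u\le\phi^+\}$. *)

theory Defs
  imports "HOL-Analysis.Analysis"
begin

text \<open>Vectors in R^N are modelled as real^'n with 'n a finite (linearly ordered) index type;
  the order on real^'n is the library's componentwise order.  Matrices are real^'n^'n.\<close>

definition vpos :: "real^'n \<Rightarrow> bool" where
  "vpos u \<longleftrightarrow> (\<forall>i. u $ i > 0)"

definition diagv :: "real^'n \<Rightarrow> real^'n \<Rightarrow> real^'n" where
  "diagv d v = (\<chi> i. d $ i * v $ i)"

definition C2 :: "(real^'n \<Rightarrow> real^'n) \<Rightarrow> bool" where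
  "C2 g \<longleftrightarrow> (\<exists>g' g''. (\<forall>x. (g has_derivative blinfun_apply (g' x)) (at x)) \<and>
                     (\<forall>x. (g' has_derivative blinfun_apply (g'' x)) (at x)) \<and>
                     continuous_on UNIV g'')"

definition piecewise_C2_on :: "(real^'n) set \<Rightarrow> (real^'n \<Rightarrow> real^'n) \<Rightarrow> bool" where
  "piecewise_C2_on S f \<longleftrightarrow>
     (\<exists>P. finite P \<and> \<Union>P = S \<and> (\<forall>p\<in>P. closed p \<and> (\<exists>g. C2 g \<and> (\<forall>x\<in>p. f x = g x))))"

definition pd_in :: "(real^'n \<Rightarrow> real^'n) \<Rightarrow> (real^'n) set \<Rightarrow> real^'n \<Rightarrow> 'n \<Rightarrow> 'n \<Rightarrow> real \<Rightarrow> bool" where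
  "pd_in f S u i j D \<longleftrightarrow>
     ((\<lambda>t. f (u + t *\<^sub>R axis i 1) $ j) has_real_derivative D)
        (at 0 within {t. u + t *\<^sub>R axis i 1 \<in> S})"

definition cooperative_on :: "(real^'n) set \<Rightarrow> (real^'n \<Rightarrow> real^'n) \<Rightarrow> bool" where
  "cooperative_on S f \<longleftrightarrow> (\<forall>u\<in>S. \<forall>i j D. i \<noteq> j \<longrightarrow> pd_in f S u j i D \<longrightarrow> D \<ge> 0)"

definition rd_solution ::
  "real^'n \<Rightarrow> (real^'n \<Rightarrow> real^'n) \<Rightarrow> (real \<Rightarrow> real^'n) \<Rightarrow> (real \<Rightarrow> real \<Rightarrow> real^'n) \<Rightarrow> bool" where
  "rd_solution d f u0 u \<longleftrightarrow>
     (\<forall>x. u 0 x = u0 x) \<and>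
     continuous_on ({0..} \<times> UNIV) (\<lambda>(t, x). u t x) \<and>
     (\<forall>t>0. \<forall>x. \<exists>ut ux uxx.
        ((\<lambda>s. u s x) has_vector_derivative ut) (at t) \<and>
        (\<forall>y. (u t has_vector_derivative ux y) (at y)) \<and>
        (ux has_vector_derivative uxx) (at x) \<and>
        ut = diagv d uxx + f (u t x))"

definition global_existence :: "real^'n \<Rightarrow> (real^'n \<Rightarrow> real^'n) \<Rightarrow> real^'n \<Rightarrow> bool" where
  "global_existence d f kp \<longleftrightarrow>
     (\<forall>u0. continuous_on UNIV u0 \<and> (\<forall>x. u0 x \<in> {0..kp}) \<longrightarrow>
        (\<exists>u. rd_solution d f u0 u \<and> (\<forall>t\<ge>0. \<forall>x. u t x \<in> {0..kp})))"

definition cspec :: "real^'n^'n \<Rightarrow> complex set" where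
  "cspec A = {z. det (mat z - (\<chi> i j. complex_of_real (A $ i $ j))) = 0}"

definition srad :: "real^'n^'n \<Rightarrow> real" where
  "srad A = Max (cmod ` cspec A)"

text \<open>Psi(A) = rho(A + alpha I) - alpha, with alpha large (here alpha = sum of |a_ii|, which makes
  A + alpha I nonnegative for the essentially nonnegative matrices considered).\<close>
definition Psi :: "real^'n^'n \<Rightarrow> real" where
  "Psi A = (let \<alpha> = (\<Sum>i\<in>UNIV. \<bar>A $ i $ i\<bar>) in srad (A + \<alpha> *\<^sub>R mat 1) - \<alpha>)"

definition Psi_block :: "'n set \<Rightarrow> real^'n^'n \<Rightarrow> real" where
  "Psi_block B A = (let \<alpha> = (\<Sum>i\<in>B. \<bar>A $ i $ i\<bar>) in
      srad (\<chi> i j. if i \<in> B \<and> j \<in> B then A $ i $ j + (if i = j then \<alpha> else 0) else 0) - \<alpha>)"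

definition irreducible_block :: "'n set \<Rightarrow> real^'n^'n \<Rightarrow> bool" where
  "irreducible_block B A \<longleftrightarrow>
     (\<forall>S. S \<subset> B \<and> S \<noteq> {} \<longrightarrow> (\<exists>i\<in>S. \<exists>j\<in>B - S. A $ i $ j \<noteq> 0))"

definition A_lam :: "real^'n \<Rightarrow> real^'n^'n \<Rightarrow> real \<Rightarrow> real^'n^'n" where
  "A_lam d J lam = (\<chi> i j. (if i = j then d $ i * lam\<^sup>2 else 0) + J $ i $ j)"

definition Phi :: "real^'n \<Rightarrow> real^'n^'n \<Rightarrow> real \<Rightarrow> real" where
  "Phi d J lam = Psi (A_lam d J lam) / lam"

definition cstar :: "real^'n \<Rightarrow> real^'n^'n \<Rightarrow> real" where
  "cstar d J = Inf (Phi d J ` {0<..})"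

definition H1 :: "real^'n \<Rightarrow> (real^'n \<Rightarrow> real^'n) \<Rightarrow> (real^'n \<Rightarrow> real^'n) \<Rightarrow> (real^'n \<Rightarrow> real^'n)
    \<Rightarrow> real^'n \<Rightarrow> real^'n \<Rightarrow> real^'n \<Rightarrow> real^'n^'n \<Rightarrow> bool" where
  "H1 d f fm fp k km kp J \<longleftrightarrow>
     vpos kp \<and>
     continuous_on {0..kp} f \<and> piecewise_C2_on {0..kp} f \<and>
     global_existence d f kp \<and>
     vpos km \<and> km \<le> k \<and> k \<le> kp \<and>
     continuous_on {0..km} fm \<and> piecewise_C2_on {0..km} fm \<and>
     continuous_on {0..kp} fp \<and> piecewise_C2_on {0..kp} fp \<and>
     (\<forall>u\<in>{0..km}. fm u \<le> f u) \<and> (\<forall>u\<in>{0..kp}. f u \<le> fp u) \<and>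
     f 0 = 0 \<and> f k = 0 \<and> fm 0 = 0 \<and> fm km = 0 \<and> fp 0 = 0 \<and> fp kp = 0 \<and>
     (\<forall>u\<in>{0..k}. vpos u \<and> f u = 0 \<longrightarrow> u = k) \<and>
     (\<forall>u\<in>{0..km}. vpos u \<and> fm u = 0 \<longrightarrow> u = km) \<and>
     (\<forall>u\<in>{0..kp}. vpos u \<and> fp u = 0 \<longrightarrow> u = kp) \<and>
     cooperative_on {0..km} fm \<and> cooperative_on {0..kp} fp \<and>
     (f has_derivative (\<lambda>h. J *v h)) (at 0 within {0..kp}) \<and>
     (fm has_derivative (\<lambda>h. J *v h)) (at 0 within {0..km}) \<and>
     (fp has_derivative (\<lambda>h. J *v h)) (at 0 within {0..kp})"

text \<open>(H2): blocks are given by a monotone block-index map b onto {..<m} (block r = b^-1 {r}),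
  following the linear order of the index type.\<close>
definition H2 :: "real^('n::{finite,linorder}) \<Rightarrow> real^('n::{finite,linorder})^('n::{finite,linorder})
    \<Rightarrow> ('n::{finite,linorder} \<Rightarrow> nat) \<Rightarrow> nat
    \<Rightarrow> (real \<Rightarrow> real^('n::{finite,linorder})) \<Rightarrow> bool" where
  "H2 d J b m \<nu> \<longleftrightarrow>
     mono b \<and> b ` UNIV = {..<m} \<and>
     (\<forall>lam>0.
        (\<forall>i j. b i < b j \<longrightarrow> A_lam d J lam $ i $ j = 0) \<and>
        (\<forall>r<m. irreducible_block {i. b i = r} (A_lam d J lam) \<or>
               (card {i. b i = r} = 1 \<and> (\<forall>i. b i = r \<longrightarrow> A_lam d J lam $ i $ i = 0))) \<and>
        Psi_block {i. b i = 0} (A_lam d J lam) = Psi (A_lam d J lam) \<and>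
        Psi (A_lam d J lam) > 0 \<and>
        (\<forall>r. 0 < r \<and> r < m \<longrightarrow> Psi_block {i. b i = r} (A_lam d J lam) < Psi (A_lam d J lam)) \<and>
        vpos (\<nu> lam) \<and> A_lam d J lam *v \<nu> lam = Psi (A_lam d J lam) *\<^sub>R \<nu> lam) \<and>
     continuous_on {0<..} \<nu>"

definition H3 :: "(real^'n \<Rightarrow> real^'n) \<Rightarrow> (real^'n \<Rightarrow> real^'n) \<Rightarrow> real^'n \<Rightarrow> real^'n
    \<Rightarrow> real^'n^'n \<Rightarrow> (real \<Rightarrow> real^'n) \<Rightarrow> bool" where
  "H3 fm fp km kp J \<nu> \<longleftrightarrow>
     (\<forall>\<alpha>>0. \<forall>lam>0.
        (\<alpha> *\<^sub>R \<nu> lam \<in> {0..km} \<longrightarrow> fm (\<alpha> *\<^sub>R \<nu> lam) \<le> \<alpha> *\<^sub>R (J *v \<nu> lam)) \<and>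
        (\<alpha> *\<^sub>R \<nu> lam \<in> {0..kp} \<longrightarrow> fp (\<alpha> *\<^sub>R \<nu> lam) \<le> \<alpha> *\<^sub>R (J *v \<nu> lam)))"

definition lam1 :: "real^'n \<Rightarrow> real \<Rightarrow> real \<Rightarrow> 'n \<Rightarrow> real" where
  "lam1 d c \<beta> i = (- c + sqrt (c\<^sup>2 + 4 * \<beta> * d $ i)) / (2 * d $ i)"

definition lam2 :: "real^'n \<Rightarrow> real \<Rightarrow> real \<Rightarrow> 'n \<Rightarrow> real" where
  "lam2 d c \<beta> i = (c + sqrt (c\<^sup>2 + 4 * \<beta> * d $ i)) / (2 * d $ i)"

definition Hfun :: "(real^'n \<Rightarrow> real^'n) \<Rightarrow> real \<Rightarrow> real^'n \<Rightarrow> 'n \<Rightarrow> real" where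
  "Hfun f \<beta> u i = \<beta> * u $ i + f u $ i"

definition Top :: "real^'n \<Rightarrow> (real^'n \<Rightarrow> real^'n) \<Rightarrow> real \<Rightarrow> real
    \<Rightarrow> (real \<Rightarrow> real^'n) \<Rightarrow> real \<Rightarrow> real^'n" where
  "Top d f c \<beta> u \<xi> = (\<chi> i. 1 / (d $ i * (lam1 d c \<beta> i + lam2 d c \<beta> i)) *
      ((LBINT s:{..\<xi>}. exp (- lam1 d c \<beta> i * (\<xi> - s)) * Hfun f \<beta> (u s) i) +
       (LBINT s:{\<xi>..}. exp (lam2 d c \<beta> i * (\<xi> - s)) * Hfun f \<beta> (u s) i)))"

definition phi_plus :: "real^'n \<Rightarrow> (real \<Rightarrow> real^'n) \<Rightarrow> real \<Rightarrow> real \<Rightarrow> real^'n" where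
  "phi_plus k \<nu> L \<xi> = (\<chi> i. min (k $ i) (\<nu> L $ i * exp (L * \<xi>)))"

definition phi_minus :: "(real \<Rightarrow> real^'n) \<Rightarrow> real \<Rightarrow> real \<Rightarrow> real \<Rightarrow> real \<Rightarrow> real^'n" where
  "phi_minus \<nu> L \<gamma> q \<xi> =
     (\<chi> i. max 0 (\<nu> L $ i * exp (L * \<xi>) - q * \<nu> (\<gamma> * L) $ i * exp (\<gamma> * L * \<xi>)))"

definition in_E :: "real \<Rightarrow> (real \<Rightarrow> real^'n) \<Rightarrow> bool" where
  "in_E \<rho> u \<longleftrightarrow> continuous_on UNIV u \<and>
     (\<forall>i. bdd_above (range (\<lambda>\<xi>. \<bar>u \<xi> $ i\<bar> * exp (- \<rho> * \<xi>))))"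

definition wnorm :: "real \<Rightarrow> (real \<Rightarrow> real^'n) \<Rightarrow> real" where
  "wnorm \<rho> u = (\<Sum>i\<in>UNIV. SUP \<xi>. \<bar>u \<xi> $ i\<bar> * exp (- \<rho> * \<xi>))"

definition A_set :: "real \<Rightarrow> (real \<Rightarrow> real^'n) \<Rightarrow> (real \<Rightarrow> real^'n) \<Rightarrow> (real \<Rightarrow> real^'n) set" where
  "A_set \<rho> pm pp = {u. in_E \<rho> u \<and> (\<forall>\<xi>. pm \<xi> \<le> u \<xi> \<and> u \<xi> \<le> pp \<xi>)}"

end

theory Submission
  imports Defs
begin


lemma exp_right_int:
  fixes mu a :: real assumes "mu > 0"
  shows "set_integrable lborel {a..} (\<lambda>s. exp (- mu * s))"
    "(LBINT s:{a..}. exp (- mu * s)) = exp (- mu * a) / mu"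
proof -
  have hk: "((\<lambda>x::real. exp (-mu*x)) has_integral exp (-mu*a)/mu) {a..}"
    using has_integral_exp_minus_to_infinity[OF assms] .
  then have "(\<lambda>x::real. exp (-mu*x)) integrable_on {a..}" by (auto simp: integrable_on_def)
  then have "(\<lambda>x::real. exp (-mu*x)) absolutely_integrable_on {a..}"
    by (intro nonnegative_absolutely_integrable_1) auto
  then have "set_integrable lebesgue {a..} (\<lambda>x::real. exp (-mu*x))" by simp
  then have "integrable lebesgue (\<lambda>x::real. indicator {a..} x *\<^sub>R exp (-mu*x))" unfolding set_integrable_def .
  moreover have m: "(\<lambda>x::real. indicator {a..} x *\<^sub>R exp (-mu*x)) \<in> borel_measurable lborel"
    by measurable
  ultimately show si: "set_integrable lborel {a..} (\<lambda>s. exp (- mu * s))"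
    unfolding set_integrable_def using integrable_completion[OF m] by simp
  show "(LBINT s:{a..}. exp (- mu * s)) = exp (- mu * a) / mu"
    using set_borel_integral_eq_integral(2)[OF si] hk integral_unique by metis
qed

lemma exp_left_int:
  fixes mu a :: real assumes "mu > 0"
  shows "set_integrable lborel {..a} (\<lambda>s. exp (mu * s))"
    "(LBINT s:{..a}. exp (mu * s)) = exp (mu * a) / mu"
proof -
  note R = exp_right_int[OF assms, of "-a"]
  define f where "f x = indicator {-a..} x *\<^sub>R exp (- mu * x)" for x :: real
  have fi: "integrable lborel f" using R(1) unfolding set_integrable_def f_def .
  have eq: "(\<lambda>x. f (0 + (-1) * x)) = (\<lambda>x. indicator {..a} x *\<^sub>R exp (mu * x))"
    by (auto simp: f_def indicator_def fun_eq_iff)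
  show "set_integrable lborel {..a} (\<lambda>s. exp (mu * s))"
    unfolding set_integrable_def using lborel_integrable_real_affine[OF fi, of "-1" 0] eq by simp
  have fv: "integral\<^sup>L lborel f = exp (mu * a) / mu"
    using R(2) by (simp add: set_lebesgue_integral_def f_def[abs_def])
  have "integral\<^sup>L lborel f = \<bar>-1\<bar> *\<^sub>R integral\<^sup>L lborel (\<lambda>x. f (0 + (-1)*x))"
    by (rule lborel_integral_real_affine) simp
  then show "(LBINT s:{..a}. exp (mu * s)) = exp (mu * a) / mu"
    using fv unfolding set_lebesgue_integral_def eq by simp
qed

lemma left_kernel:
  fixes h :: "real \<Rightarrow> real" and l1 mu a b \<xi> :: real
  assumes hm: "h \<in> borel_measurable lborel" and l1: "l1 > 0" and mu: "0 \<le> mu"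
    and ab: "0 \<le> a" "0 \<le> b"
    and hb: "\<And>s. \<bar>h s\<bar> \<le> a + b * exp (mu * s)"
  shows "set_integrable lborel {..\<xi>} (\<lambda>s. exp (- l1 * (\<xi> - s)) * (a + b * exp (mu * s)))"
    "set_integrable lborel {..\<xi>} (\<lambda>s. exp (- l1 * (\<xi> - s)) * h s)"
    "\<bar>LBINT s:{..\<xi>}. exp (- l1 * (\<xi> - s)) * h s\<bar> \<le> a / l1 + b * exp (mu * \<xi>) / (l1 + mu)"
proof -
  let ?g = "\<lambda>s. exp (- l1 * (\<xi> - s)) * (a + b * exp (mu * s))"
  have g_eq: "?g = (\<lambda>s. (a * exp (-l1*\<xi>)) * exp (l1 * s) + (b * exp (-l1*\<xi>)) * exp ((l1+mu)* s))"
    by (auto simp: fun_eq_iff algebra_simps simp flip: exp_add)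
  have l1m: "l1 + mu > 0" using l1 mu by simp
  note i1 = exp_left_int[OF l1, of \<xi>] and i2 = exp_left_int[OF l1m, of \<xi>]
  have i1': "set_integrable lborel {..\<xi>} (\<lambda>s. (a * exp (-l1*\<xi>)) * exp (l1 * s))"
    using i1(1) by simp
  have i2': "set_integrable lborel {..\<xi>} (\<lambda>s. (b * exp (-l1*\<xi>)) * exp ((l1+mu) * s))"
    using i2(1) by simp
  show gi: "set_integrable lborel {..\<xi>} ?g"
    unfolding g_eq by (rule set_integral_add(1)[OF i1' i2'])
  have "(LBINT s:{..\<xi>}. ?g s) = (a * exp (-l1*\<xi>)) * (exp (l1 * \<xi>) / l1)
        + (b * exp (-l1*\<xi>)) * (exp ((l1+mu) * \<xi>) / (l1+mu))"
    unfolding g_eq set_integral_add(2)[OF i1' i2'] set_integral_mult_right i1(2) i2(2) by (rule refl)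
  also have "\<dots> = a / l1 + b * exp (mu * \<xi>) / (l1 + mu)"
    by (simp add: algebra_simps flip: exp_add)
  finally have gv: "(LBINT s:{..\<xi>}. ?g s) = a / l1 + b * exp (mu * \<xi>) / (l1 + mu)" .
  have meas: "set_borel_measurable lborel {..\<xi>} (\<lambda>s. exp (- l1 * (\<xi> - s)) * h s)"
    using hm unfolding set_borel_measurable_def by measurable
  have bnd: "\<bar>exp (- l1 * (\<xi> - s)) * h s\<bar> \<le> ?g s" for s
    by (simp add: abs_mult hb mult_left_mono)
  have gpos: "0 \<le> ?g s" for s using ab by simp
  show fi: "set_integrable lborel {..\<xi>} (\<lambda>s. exp (- l1 * (\<xi> - s)) * h s)"
    by (rule set_integrable_bound[OF gi meas]) (use bnd gpos in auto)
  have "\<bar>LBINT s:{..\<xi>}. exp (- l1 * (\<xi> - s)) * h s\<bar> \<le> (LBINT s:{..\<xi>}. \<bar>exp (- l1 * (\<xi> - s)) * h s\<bar>)"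
    using set_integral_norm_bound[OF fi] by simp
  also have "\<dots> \<le> (LBINT s:{..\<xi>}. ?g s)"
    by (rule set_integral_mono[OF set_integrable_abs[OF fi] gi]) (rule bnd)
  finally show "\<bar>LBINT s:{..\<xi>}. exp (- l1 * (\<xi> - s)) * h s\<bar> \<le> a / l1 + b * exp (mu * \<xi>) / (l1 + mu)"
    using gv by simp
qed

lemma right_kernel:
  fixes h :: "real \<Rightarrow> real" and l2 mu a b \<xi> :: real
  assumes hm: "h \<in> borel_measurable lborel" and l2: "mu < l2" and mu: "0 \<le> mu"
    and ab: "0 \<le> a" "0 \<le> b"
    and hb: "\<And>s. \<bar>h s\<bar> \<le> a + b * exp (mu * s)"
  shows "set_integrable lborel {\<xi>..} (\<lambda>s. exp (l2 * (\<xi> - s)) * (a + b * exp (mu * s)))"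
    "set_integrable lborel {\<xi>..} (\<lambda>s. exp (l2 * (\<xi> - s)) * h s)"
    "\<bar>LBINT s:{\<xi>..}. exp (l2 * (\<xi> - s)) * h s\<bar> \<le> a / l2 + b * exp (mu * \<xi>) / (l2 - mu)"
proof -
  let ?g = "\<lambda>s. exp (l2 * (\<xi> - s)) * (a + b * exp (mu * s))"
  have g_eq: "?g = (\<lambda>s. (a * exp (l2*\<xi>)) * exp (- l2 * s) + (b * exp (l2*\<xi>)) * exp (- (l2-mu)* s))"
    by (auto simp: fun_eq_iff algebra_simps simp flip: exp_add)
  have l2p: "l2 > 0" using l2 mu by simp
  have l2m: "l2 - mu > 0" using l2 by simp
  note i1 = exp_right_int[OF l2p, of \<xi>] and i2 = exp_right_int[OF l2m, of \<xi>]
  have i1': "set_integrable lborel {\<xi>..} (\<lambda>s. (a * exp (l2*\<xi>)) * exp (- l2 * s))"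
    using i1(1) by simp
  have i2': "set_integrable lborel {\<xi>..} (\<lambda>s. (b * exp (l2*\<xi>)) * exp (- (l2-mu) * s))"
    using i2(1) by simp
  show gi: "set_integrable lborel {\<xi>..} ?g"
    unfolding g_eq by (rule set_integral_add(1)[OF i1' i2'])
  have "(LBINT s:{\<xi>..}. ?g s) = (a * exp (l2*\<xi>)) * (exp (- l2 * \<xi>) / l2)
        + (b * exp (l2*\<xi>)) * (exp (- (l2-mu) * \<xi>) / (l2-mu))"
    unfolding g_eq set_integral_add(2)[OF i1' i2'] set_integral_mult_right i1(2) i2(2) by (rule refl)
  also have "\<dots> = a / l2 + b * exp (mu * \<xi>) / (l2 - mu)"
    by (simp add: algebra_simps flip: exp_add)
  finally have gv: "(LBINT s:{\<xi>..}. ?g s) = a / l2 + b * exp (mu * \<xi>) / (l2 - mu)" .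
  have meas: "set_borel_measurable lborel {\<xi>..} (\<lambda>s. exp (l2 * (\<xi> - s)) * h s)"
    using hm unfolding set_borel_measurable_def by measurable
  have bnd: "\<bar>exp (l2 * (\<xi> - s)) * h s\<bar> \<le> ?g s" for s
    by (simp add: abs_mult hb mult_left_mono)
  have gpos: "0 \<le> ?g s" for s using ab by simp
  show fi: "set_integrable lborel {\<xi>..} (\<lambda>s. exp (l2 * (\<xi> - s)) * h s)"
    by (rule set_integrable_bound[OF gi meas]) (use bnd gpos in auto)
  have "\<bar>LBINT s:{\<xi>..}. exp (l2 * (\<xi> - s)) * h s\<bar> \<le> (LBINT s:{\<xi>..}. \<bar>exp (l2 * (\<xi> - s)) * h s\<bar>)"
    using set_integral_norm_bound[OF fi] by simp
  also have "\<dots> \<le> (LBINT s:{\<xi>..}. ?g s)"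
    by (rule set_integral_mono[OF set_integrable_abs[OF fi] gi]) (rule bnd)
  finally show "\<bar>LBINT s:{\<xi>..}. exp (l2 * (\<xi> - s)) * h s\<bar> \<le> a / l2 + b * exp (mu * \<xi>) / (l2 - mu)"
    using gv by simp
qed

lemma isCont_param_integral:
  fixes G :: "real \<Rightarrow> real \<Rightarrow> real" and w :: "real \<Rightarrow> real"
  assumes meas: "\<And>\<xi>. G \<xi> \<in> borel_measurable lborel"
    and w: "integrable lborel w"
    and bnd: "\<And>\<xi> s. \<bar>\<xi> - \<xi>0\<bar> \<le> 1 \<Longrightarrow> \<bar>G \<xi> s\<bar> \<le> w s"
    and cont: "\<And>s. s \<noteq> \<xi>0 \<Longrightarrow> isCont (\<lambda>\<xi>. G \<xi> s) \<xi>0"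
  shows "isCont (\<lambda>\<xi>. integral\<^sup>L lborel (G \<xi>)) \<xi>0"
proof (rule continuous_at_sequentiallyI)
  fix X :: "nat \<Rightarrow> real" assume X: "X \<longlonglongrightarrow> \<xi>0"
  define Y where "Y n = (if \<bar>X n - \<xi>0\<bar> \<le> 1 then X n else \<xi>0)" for n
  have ev: "eventually (\<lambda>n. X n = Y n) sequentially"
  proof -
    have "eventually (\<lambda>n. dist (X n) \<xi>0 < 1) sequentially" using X by (rule tendstoD) simp
    then show ?thesis by eventually_elim (auto simp: Y_def dist_real_def)
  qed
  have Y: "Y \<longlonglongrightarrow> \<xi>0" using X ev by (rule Lim_transform_eventually)
  have "(\<lambda>n. integral\<^sup>L lborel (G (Y n))) \<longlonglongrightarrow> integral\<^sup>L lborel (G \<xi>0)"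
  proof (rule integral_dominated_convergence[where w=w])
    show "G \<xi>0 \<in> borel_measurable lborel" by (rule meas)
    show "\<And>n. G (Y n) \<in> borel_measurable lborel" by (rule meas)
    show "integrable lborel w" by fact
    show "AE s in lborel. (\<lambda>n. G (Y n) s) \<longlonglongrightarrow> G \<xi>0 s"
      using AE_lborel_singleton[of \<xi>0] by eventually_elim (rule isCont_tendsto_compose[OF cont Y])
    show "\<And>n. AE s in lborel. norm (G (Y n) s) \<le> w s"
      by (auto simp: Y_def intro!: bnd)
  qed
  moreover have "eventually (\<lambda>n. integral\<^sup>L lborel (G (Y n)) = integral\<^sup>L lborel (G (X n))) sequentially"
    using ev by eventually_elim simp
  ultimately show "(\<lambda>n. integral\<^sup>L lborel (G (X n))) \<longlonglongrightarrow> integral\<^sup>L lborel (G \<xi>0)"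
    by (rule Lim_transform_eventually)
qed

lemma left_kernel_cont:
  fixes h :: "real \<Rightarrow> real" and l1 mu a b \<xi>0 :: real
  assumes hm: "h \<in> borel_measurable lborel" and l1: "l1 > 0" and mu: "0 \<le> mu"
    and ab: "0 \<le> a" "0 \<le> b"
    and hb: "\<And>s. \<bar>h s\<bar> \<le> a + b * exp (mu * s)"
  shows "isCont (\<lambda>\<xi>. LBINT s:{..\<xi>}. exp (- l1 * (\<xi> - s)) * h s) \<xi>0"
proof -
  let ?G = "\<lambda>\<xi> s. indicator {..\<xi>} s *\<^sub>R (exp (- l1 * (\<xi> - s)) * h s)"
  let ?w = "\<lambda>s. exp (2*l1) * (indicator {..\<xi>0+1} s *\<^sub>R (exp (- l1 * ((\<xi>0+1) - s)) * (a + b * exp (mu * s))))"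
  have "isCont (\<lambda>\<xi>. integral\<^sup>L lborel (?G \<xi>)) \<xi>0"
  proof (rule isCont_param_integral)
    show "\<And>\<xi>. ?G \<xi> \<in> borel_measurable lborel" using hm by measurable
    show "integrable lborel ?w"
      using left_kernel(1)[OF hm l1 mu ab hb, of "\<xi>0+1"] unfolding set_integrable_def by simp
    show "\<bar>?G \<xi> s\<bar> \<le> ?w s" if "\<bar>\<xi> - \<xi>0\<bar> \<le> 1" for \<xi> s
    proof (cases "s \<le> \<xi>")
      case True
      then have s1: "s \<le> \<xi>0+1" using that by simp
      have "l1 * (\<xi>0 - 1) \<le> l1 * \<xi>" by (rule mult_left_mono) (use that l1 in auto)
      then have "exp (- l1 * (\<xi> - s)) \<le> exp (2*l1 + - l1 * ((\<xi>0+1) - s))"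
        by (subst exp_le_cancel_iff) (simp add: algebra_simps)
      then have e: "exp (- l1 * (\<xi> - s)) \<le> exp (2*l1) * exp (- l1 * ((\<xi>0+1) - s))"
        by (simp only: exp_add)
      have "\<bar>?G \<xi> s\<bar> = exp (- l1 * (\<xi> - s)) * \<bar>h s\<bar>" using True by (simp add: abs_mult)
      also have "\<dots> \<le> (exp (2*l1) * exp (- l1 * ((\<xi>0+1) - s))) * (a + b * exp (mu * s))"
        by (rule mult_mono[OF e hb]) auto
      also have "\<dots> = ?w s" using s1 by simp
      finally show ?thesis .
    next
      case False
      then show ?thesis using ab by (simp add: indicator_def)
    qed
    show "isCont (\<lambda>\<xi>. ?G \<xi> s) \<xi>0" if "s \<noteq> \<xi>0" for s
    proof (cases "s < \<xi>0")
      case True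
      have "eventually (\<lambda>\<xi>. \<xi> \<in> {s<..}) (nhds \<xi>0)"
        by (rule eventually_nhds_in_open) (use True in auto)
      then have "eventually (\<lambda>\<xi>. ?G \<xi> s = exp (- l1 * (\<xi> - s)) * h s) (nhds \<xi>0)"
        by eventually_elim (auto simp: indicator_def)
      then have "isCont (\<lambda>\<xi>. ?G \<xi> s) \<xi>0 = isCont (\<lambda>\<xi>. exp (- l1 * (\<xi> - s)) * h s) \<xi>0" by (rule isCont_cong)
      moreover have "isCont (\<lambda>\<xi>. exp (- l1 * (\<xi> - s)) * h s) \<xi>0" by (intro continuous_intros)
      ultimately show ?thesis by simp
    next
      case False
      with that have "s > \<xi>0" by simp
      have "eventually (\<lambda>\<xi>. \<xi> \<in> {..<s}) (nhds \<xi>0)"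
        by (rule eventually_nhds_in_open) (use \<open>s > \<xi>0\<close> in auto)
      then have "eventually (\<lambda>\<xi>. ?G \<xi> s = 0) (nhds \<xi>0)"
        by eventually_elim (auto simp: indicator_def)
      then have "isCont (\<lambda>\<xi>. ?G \<xi> s) \<xi>0 = isCont (\<lambda>\<xi>. (0::real)) \<xi>0" by (rule isCont_cong)
      moreover have "isCont (\<lambda>\<xi>. (0::real)) \<xi>0" by (intro continuous_intros)
      ultimately show ?thesis by simp
    qed
  qed
  then show ?thesis unfolding set_lebesgue_integral_def .
qed

lemma right_kernel_cont:
  fixes h :: "real \<Rightarrow> real" and l2 mu a b \<xi>0 :: real
  assumes hm: "h \<in> borel_measurable lborel" and l2: "mu < l2" and mu: "0 \<le> mu"
    and ab: "0 \<le> a" "0 \<le> b"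
    and hb: "\<And>s. \<bar>h s\<bar> \<le> a + b * exp (mu * s)"
  shows "isCont (\<lambda>\<xi>. LBINT s:{\<xi>..}. exp (l2 * (\<xi> - s)) * h s) \<xi>0"
proof -
  have l2p: "l2 > 0" using l2 mu by simp
  let ?G = "\<lambda>\<xi> s. indicator {\<xi>..} s *\<^sub>R (exp (l2 * (\<xi> - s)) * h s)"
  let ?w = "\<lambda>s. exp (2*l2) * (indicator {\<xi>0-1..} s *\<^sub>R (exp (l2 * ((\<xi>0-1) - s)) * (a + b * exp (mu * s))))"
  have "isCont (\<lambda>\<xi>. integral\<^sup>L lborel (?G \<xi>)) \<xi>0"
  proof (rule isCont_param_integral)
    show "\<And>\<xi>. ?G \<xi> \<in> borel_measurable lborel" using hm by measurable
    show "integrable lborel ?w"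
      using right_kernel(1)[OF hm l2 mu ab hb, of "\<xi>0-1"] unfolding set_integrable_def by simp
    show "\<bar>?G \<xi> s\<bar> \<le> ?w s" if "\<bar>\<xi> - \<xi>0\<bar> \<le> 1" for \<xi> s
    proof (cases "\<xi> \<le> s")
      case True
      then have s1: "\<xi>0-1 \<le> s" using that by simp
      have "l2 * \<xi> \<le> l2 * (\<xi>0 + 1)" by (rule mult_left_mono) (use that l2p in auto)
      then have "exp (l2 * (\<xi> - s)) \<le> exp (2*l2 + l2 * ((\<xi>0-1) - s))"
        by (subst exp_le_cancel_iff) (simp add: algebra_simps)
      then have e: "exp (l2 * (\<xi> - s)) \<le> exp (2*l2) * exp (l2 * ((\<xi>0-1) - s))"
        by (simp only: exp_add)
      have "\<bar>?G \<xi> s\<bar> = exp (l2 * (\<xi> - s)) * \<bar>h s\<bar>" using True by (simp add: abs_mult)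
      also have "\<dots> \<le> (exp (2*l2) * exp (l2 * ((\<xi>0-1) - s))) * (a + b * exp (mu * s))"
        by (rule mult_mono[OF e hb]) auto
      also have "\<dots> = ?w s" using s1 by simp
      finally show ?thesis .
    next
      case False
      then show ?thesis using ab by (simp add: indicator_def)
    qed
    show "isCont (\<lambda>\<xi>. ?G \<xi> s) \<xi>0" if "s \<noteq> \<xi>0" for s
    proof (cases "s > \<xi>0")
      case True
      have "eventually (\<lambda>\<xi>. \<xi> \<in> {..<s}) (nhds \<xi>0)"
        by (rule eventually_nhds_in_open) (use True in auto)
      then have "eventually (\<lambda>\<xi>. ?G \<xi> s = exp (l2 * (\<xi> - s)) * h s) (nhds \<xi>0)"
        by eventually_elim (auto simp: indicator_def)
      then have "isCont (\<lambda>\<xi>. ?G \<xi> s) \<xi>0 = isCont (\<lambda>\<xi>. exp (l2 * (\<xi> - s)) * h s) \<xi>0" by (rule isCont_cong)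
      moreover have "isCont (\<lambda>\<xi>. exp (l2 * (\<xi> - s)) * h s) \<xi>0" by (intro continuous_intros)
      ultimately show ?thesis by simp
    next
      case False
      with that have "s < \<xi>0" by simp
      have "eventually (\<lambda>\<xi>. \<xi> \<in> {s<..}) (nhds \<xi>0)"
        by (rule eventually_nhds_in_open) (use \<open>s < \<xi>0\<close> in auto)
      then have "eventually (\<lambda>\<xi>. ?G \<xi> s = 0) (nhds \<xi>0)"
        by eventually_elim (auto simp: indicator_def)
      then have "isCont (\<lambda>\<xi>. ?G \<xi> s) \<xi>0 = isCont (\<lambda>\<xi>. (0::real)) \<xi>0" by (rule isCont_cong)
      moreover have "isCont (\<lambda>\<xi>. (0::real)) \<xi>0" by (intro continuous_intros)
      ultimately show ?thesis by simp
    qed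
  qed
  then show ?thesis unfolding set_lebesgue_integral_def .
qed



lemma f_lin_bound:
  fixes f :: "real^'n \<Rightarrow> real^'n" and kp :: "real^'n" and J :: "real^'n^'n"
  assumes cont: "continuous_on {0..kp} f" and f0: "f 0 = 0"
    and der: "(f has_derivative (\<lambda>h. J *v h)) (at 0 within {0..kp})"
  shows "\<exists>C\<ge>0. \<forall>w\<in>{0..kp}. norm (f w) \<le> C * norm w"
proof -
  have "\<forall>e>0. \<exists>d>0. \<forall>y\<in>{0..kp}. norm (y - 0) < d \<longrightarrow> norm (f y - f 0 - J *v (y - 0)) \<le> e * norm (y - 0)"
    using der unfolding has_derivative_within_alt by blast
  then obtain dd where dd: "dd > 0" "\<And>y. y\<in>{0..kp} \<Longrightarrow> norm y < dd \<Longrightarrow> norm (f y - J *v y) \<le> norm y"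
    using f0 by (metis diff_zero mult_1 zero_less_one)
  have bl: "bounded_linear (\<lambda>h. J *v h)" using has_derivative_bounded_linear[OF der] .
  obtain K where K: "\<And>x. norm (J *v x) \<le> norm x * K" using bounded_linear.bounded[OF bl] by blast
  have "compact {0..kp}" by (simp add: interval_cbox_cart compact_cbox)
  then have "bounded (f ` {0..kp})" using compact_continuous_image[OF cont] compact_imp_bounded by blast
  then obtain M where M0: "\<forall>x\<in>f ` {0..kp}. norm x \<le> M" unfolding bounded_iff by blast
  then have M: "\<And>w. w\<in>{0..kp} \<Longrightarrow> norm (f w) \<le> M" by blast
  define C where "C = \<bar>K\<bar> + 1 + \<bar>M\<bar> / dd"
  have Cexp: "C * norm w = \<bar>K\<bar> * norm w + norm w + (\<bar>M\<bar> / dd) * norm w" for w :: "real^'n"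
    by (simp add: C_def algebra_simps)
  show ?thesis
  proof (intro exI[of _ C] conjI ballI)
    show "0 \<le> C" using dd by (simp add: C_def)
    fix w assume w: "w \<in> {0..kp}"
    have t3: "0 \<le> (\<bar>M\<bar> / dd) * norm w" using dd by simp
    have t1: "norm w * K \<le> \<bar>K\<bar> * norm w" by (simp add: mult.commute mult_right_mono)
    show "norm (f w) \<le> C * norm w"
    proof (cases "norm w < dd")
      case True
      then have a: "norm (f w - J *v w) \<le> norm w" using dd(2) w by auto
      have "norm (f w) \<le> norm (J *v w) + norm (f w - J *v w)" by (rule norm_triangle_sub)
      then show ?thesis using a K[of w] t1 t3 Cexp[of w] by linarith
    next
      case False
      have "\<bar>M\<bar> = (\<bar>M\<bar> / dd) * dd" using dd by simp
      also have "\<dots> \<le> (\<bar>M\<bar> / dd) * norm w" using False dd by (intro mult_left_mono) auto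
      finally have "norm (f w) \<le> (\<bar>M\<bar> / dd) * norm w" using M[OF w] by linarith
      then show ?thesis using Cexp[of w] t1 by (smt (verit) norm_ge_zero abs_ge_zero mult_nonneg_nonneg)
    qed
  qed
qed

lemma kernel_P:
  fixes h :: "real \<Rightarrow> real"
  assumes hm: "h \<in> borel_measurable lborel" and la: "la > 0" and mu: "0 \<le> mu" "mu < lb"
    and ab: "0 \<le> a" "0 \<le> b" and hb: "\<And>s. \<bar>h s\<bar> \<le> a + b * exp (mu * s)"
  shows "set_integrable lborel {..\<xi>} (\<lambda>s. exp (- la * (\<xi> - s)) * h s)"
    "set_integrable lborel {\<xi>..} (\<lambda>s. exp (lb * (\<xi> - s)) * h s)"
    "\<bar>(LBINT s:{..\<xi>}. exp (- la * (\<xi> - s)) * h s) + (LBINT s:{\<xi>..}. exp (lb * (\<xi> - s)) * h s)\<bar>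
       \<le> a * (1/la + 1/lb) + b * exp (mu * \<xi>) * (1/(la+mu) + 1/(lb-mu))"
proof -
  note L = left_kernel[OF hm la mu(1) ab hb, of \<xi>]
  note R = right_kernel[OF hm mu(2) mu(1) ab hb, of \<xi>]
  show "set_integrable lborel {..\<xi>} (\<lambda>s. exp (- la * (\<xi> - s)) * h s)" by (rule L(2))
  show "set_integrable lborel {\<xi>..} (\<lambda>s. exp (lb * (\<xi> - s)) * h s)" by (rule R(2))
  have "\<bar>(LBINT s:{..\<xi>}. exp (- la * (\<xi> - s)) * h s) + (LBINT s:{\<xi>..}. exp (lb * (\<xi> - s)) * h s)\<bar>
    \<le> (a / la + b * exp (mu * \<xi>) / (la + mu)) + (a / lb + b * exp (mu * \<xi>) / (lb - mu))"
    using L(3) R(3) by linarith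
  also have "\<dots> = a * (1/la + 1/lb) + b * exp (mu * \<xi>) * (1/(la+mu) + 1/(lb-mu))"
    by (simp add: algebra_simps)
  finally show "\<bar>(LBINT s:{..\<xi>}. exp (- la * (\<xi> - s)) * h s) + (LBINT s:{\<xi>..}. exp (lb * (\<xi> - s)) * h s)\<bar>
       \<le> a * (1/la + 1/lb) + b * exp (mu * \<xi>) * (1/(la+mu) + 1/(lb-mu))" .
qed

lemma kernel_P_cont:
  fixes h :: "real \<Rightarrow> real"
  assumes hm: "h \<in> borel_measurable lborel" and la: "la > 0" and mu: "0 \<le> mu" "mu < lb"
    and ab: "0 \<le> a" "0 \<le> b" and hb: "\<And>s. \<bar>h s\<bar> \<le> a + b * exp (mu * s)"
  shows "continuous_on UNIV (\<lambda>\<xi>. (LBINT s:{..\<xi>}. exp (- la * (\<xi> - s)) * h s) + (LBINT s:{\<xi>..}. exp (lb * (\<xi> - s)) * h s))"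
  by (intro continuous_at_imp_continuous_on ballI isCont_add left_kernel_cont[OF hm la mu(1) ab hb]
      right_kernel_cont[OF hm mu(2) mu(1) ab hb])

lemma exp_small:
  fixes K \<alpha> \<epsilon> :: real
  assumes "\<alpha> > 0" "\<epsilon> > 0"
  shows "\<exists>R\<ge>0. K * exp (- \<alpha> * R) \<le> \<epsilon>"
proof (cases "K \<le> 0")
  case True
  then show ?thesis using assms by (intro exI[of _ 0]) (auto intro: order_trans[OF mult_nonpos_nonneg])
next
  case False
  define R where "R = max 0 (ln (K / \<epsilon>) / \<alpha>)"
  have "ln (K/\<epsilon>)/\<alpha> \<le> R" by (simp add: R_def)
  then have "ln (K / \<epsilon>) \<le> R * \<alpha>" using assms by (simp add: pos_divide_le_eq)
  then have "- \<alpha> * R \<le> - ln (K / \<epsilon>)" by (simp add: algebra_simps)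
  then have "exp (- \<alpha> * R) \<le> exp (- ln (K / \<epsilon>))" by simp
  also have "\<dots> = \<epsilon> / K" using False assms by (simp add: exp_minus)
  finally have "K * exp (- \<alpha> * R) \<le> K * (\<epsilon> / K)" using False by (intro mult_left_mono) auto
  then show ?thesis using False by (intro exI[of _ R]) (auto simp: R_def)
qed

lemma wnorm_comp_le:
  fixes u v :: "real \<Rightarrow> real^'n"
  assumes u: "in_E \<rho> u" and v: "in_E \<rho> v"
  shows "\<bar>v s $ j - u s $ j\<bar> * exp (- \<rho> * s) \<le> wnorm \<rho> (\<lambda>\<xi>. v \<xi> - u \<xi>)"
proof -
  have bd: "bdd_above (range (\<lambda>\<xi>. \<bar>v \<xi> $ i - u \<xi> $ i\<bar> * exp (- \<rho> * \<xi>)))" for i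
  proof -
    obtain Bu where Bu: "\<And>\<xi>. \<bar>u \<xi> $ i\<bar> * exp (- \<rho> * \<xi>) \<le> Bu"
      using u unfolding in_E_def bdd_above_def by auto
    obtain Bv where Bv: "\<And>\<xi>. \<bar>v \<xi> $ i\<bar> * exp (- \<rho> * \<xi>) \<le> Bv"
      using v unfolding in_E_def bdd_above_def by auto
    have "\<bar>v \<xi> $ i - u \<xi> $ i\<bar> * exp (- \<rho> * \<xi>) \<le> Bv + Bu" for \<xi>
    proof -
      have "\<bar>v \<xi> $ i - u \<xi> $ i\<bar> * exp (- \<rho> * \<xi>) \<le> (\<bar>v \<xi> $ i\<bar> + \<bar>u \<xi> $ i\<bar>) * exp (- \<rho> * \<xi>)"
        by (intro mult_right_mono) auto
      then show ?thesis using Bu[of \<xi>] Bv[of \<xi>] by (simp add: algebra_simps)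
    qed
    then show ?thesis by (auto simp: bdd_above_def)
  qed
  have le: "\<bar>v s $ i - u s $ i\<bar> * exp (- \<rho> * s) \<le> (SUP \<xi>. \<bar>v \<xi> $ i - u \<xi> $ i\<bar> * exp (- \<rho> * \<xi>))" for i s
    using cSUP_upper[OF UNIV_I bd[of i]] by simp
  have nn: "0 \<le> (SUP \<xi>. \<bar>v \<xi> $ i - u \<xi> $ i\<bar> * exp (- \<rho> * \<xi>))" for i
    by (rule order_trans[OF _ le[where i=i and s=0]]) simp
  have "(SUP \<xi>. \<bar>v \<xi> $ j - u \<xi> $ j\<bar> * exp (- \<rho> * \<xi>)) \<le> wnorm \<rho> (\<lambda>\<xi>. v \<xi> - u \<xi>)"
    unfolding wnorm_def vector_minus_component by (intro member_le_sum nn) auto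
  then show ?thesis using le[where i=j and s=s] by linarith
qed

lemma A_facts:
  fixes u :: "real \<Rightarrow> real^'n"
  assumes u: "u \<in> A_set \<rho> (phi_minus \<nu> L \<gamma> q) (phi_plus k \<nu> L)" and kkp: "k \<le> kp"
  shows "u s \<in> {0..kp}" "0 \<le> u s $ j" "u s $ j \<le> \<nu> L $ j * exp (L * s)" "u s $ j \<le> k $ j" "in_E \<rho> u"
proof -
  from u have E: "in_E \<rho> u" and lo: "phi_minus \<nu> L \<gamma> q s \<le> u s" and hi: "u s \<le> phi_plus k \<nu> L s"
    by (auto simp: A_set_def)
  show "in_E \<rho> u" by (rule E)
  have lo': "0 \<le> u s $ i" for i using lo unfolding less_eq_vec_def phi_minus_def by (auto dest: spec[of _ i])
  have hi': "u s $ i \<le> \<nu> L $ i * exp (L * s) \<and> u s $ i \<le> k $ i" for i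
    using hi unfolding less_eq_vec_def phi_plus_def by (auto dest: spec[of _ i])
  show "0 \<le> u s $ j" by (rule lo')
  show "u s $ j \<le> \<nu> L $ j * exp (L * s)" "u s $ j \<le> k $ j" using hi' by auto
  show "u s \<in> {0..kp}"
    using lo' hi' kkp unfolding atLeastAtMost_iff less_eq_vec_def by (auto intro: order_trans)
qed



theorem lemma4p6:
  fixes d k km kp :: "real^('n::{finite,linorder})"
    and f fm fp :: "real^('n::{finite,linorder}) \<Rightarrow> real^('n::{finite,linorder})"
    and J :: "real^('n::{finite,linorder})^('n::{finite,linorder})"
    and b :: "'n::{finite,linorder} \<Rightarrow> nat" and m :: nat
    and \<nu> :: "real \<Rightarrow> real^('n::{finite,linorder})"
    and c Lc \<beta> \<gamma> q \<rho> :: real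
  assumes d_pos: "vpos d"
    and hyp1: "H1 d f fm fp k km kp J"
    and hyp2: "H2 d J b m \<nu>"
    and hyp3: "H3 fm fp km kp J \<nu>"
    and c_gt: "c > cstar d J"
    and Lc: "Lc > 0" "Phi d J Lc = c" "\<forall>l. 0 < l \<and> l < Lc \<longrightarrow> Phi d J l \<noteq> c"
    and beta: "\<exists>M<\<beta>. \<forall>u\<in>{0..kp}. \<forall>i j D. pd_in f {0..kp} u i j D \<longrightarrow> \<bar>D\<bar> \<le> M"
    and lams: "\<forall>i. lam2 d c \<beta> i > lam1 d c \<beta> i \<and> lam1 d c \<beta> i > 2 * Lc"
    and gamma: "1 < \<gamma>" "\<gamma> < 2"
    and q: "q > 1" "\<forall>\<xi> i. phi_minus \<nu> Lc \<gamma> q \<xi> $ i < phi_plus k \<nu> Lc \<xi> $ i"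
    and rho: "0 < \<rho>" "\<rho> < Lc"
  shows "(\<forall>u\<in>A_set \<rho> (phi_minus \<nu> Lc \<gamma> q) (phi_plus k \<nu> Lc). in_E \<rho> (Top d f c \<beta> u)) \<and>
         (\<forall>u\<in>A_set \<rho> (phi_minus \<nu> Lc \<gamma> q) (phi_plus k \<nu> Lc). \<forall>\<epsilon>>0. \<exists>\<delta>>0.
            \<forall>v\<in>A_set \<rho> (phi_minus \<nu> Lc \<gamma> q) (phi_plus k \<nu> Lc).
              wnorm \<rho> (\<lambda>\<xi>. v \<xi> - u \<xi>) < \<delta> \<longrightarrow>
              wnorm \<rho> (\<lambda>\<xi>. Top d f c \<beta> v \<xi> - Top d f c \<beta> u \<xi>) < \<epsilon>)"
proof -
  define AA where "AA = A_set \<rho> (phi_minus \<nu> Lc \<gamma> q) (phi_plus k \<nu> Lc)"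
  have dpos: "\<And>i. d $ i > 0" using d_pos by (simp add: vpos_def)
  have cont_f: "continuous_on {0..kp} f" and f0: "f 0 = 0" and kkp: "k \<le> kp"
    and der: "(f has_derivative (\<lambda>h. J *v h)) (at 0 within {0..kp})"
    using hyp1 unfolding H1_def by auto
  have nupos: "\<And>j. \<nu> Lc $ j > 0" using hyp2 Lc(1) unfolding H2_def vpos_def by auto
  have l1g: "\<And>i. lam1 d c \<beta> i > 2*Lc" and l21: "\<And>i. lam2 d c \<beta> i > lam1 d c \<beta> i"
    using lams by auto
  have l1pos: "\<And>i. lam1 d c \<beta> i > 0" using l1g Lc(1) by (smt (verit))
  have l2pos: "\<And>i. lam2 d c \<beta> i > 0" using l1pos l21 by (smt (verit))
  obtain C where C: "C \<ge> 0" "\<And>w. w\<in>{0..kp} \<Longrightarrow> norm (f w) \<le> C * norm w"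
    using f_lin_bound[OF cont_f f0 der] by auto
  define CH where "CH = \<bar>\<beta>\<bar> + C"
  have CH0: "CH \<ge> 0" using C(1) by (simp add: CH_def)
  have Hb: "\<bar>Hfun f \<beta> w i\<bar> \<le> CH * norm w" if "w \<in> {0..kp}" for w i
  proof -
    have "\<bar>Hfun f \<beta> w i\<bar> \<le> \<bar>\<beta>\<bar> * \<bar>w $ i\<bar> + \<bar>f w $ i\<bar>"
      unfolding Hfun_def by (metis abs_triangle_ineq abs_mult)
    also have "\<dots> \<le> \<bar>\<beta>\<bar> * norm w + norm (f w)"
      by (intro add_mono mult_left_mono component_le_norm_cart) auto
    also have "\<dots> \<le> \<bar>\<beta>\<bar> * norm w + C * norm w" using C(2)[OF that] by simp
    finally show ?thesis by (simp add: CH_def algebra_simps)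
  qed
  define Nv where "Nv = (\<Sum>j\<in>UNIV. \<nu> Lc $ j)"
  define Nk where "Nk = (\<Sum>j\<in>UNIV. \<bar>k $ j\<bar>)"
  define M1 where "M1 = CH * Nv"
  define M0 where "M0 = CH * Nk"
  define M where "M = max M0 M1"
  have Nv0: "Nv \<ge> 0" unfolding Nv_def by (intro sum_nonneg) (simp add: less_imp_le nupos)
  have Nk0: "Nk \<ge> 0" unfolding Nk_def by (intro sum_nonneg) simp
  have M10: "M1 \<ge> 0" using CH0 Nv0 by (simp add: M1_def)
  have M00: "M0 \<ge> 0" using CH0 Nk0 by (simp add: M0_def)
  have M0M: "M0 \<le> M" and M1M: "M1 \<le> M" and Mpos: "M \<ge> 0" using M00 by (auto simp: M_def)
  have hbd: "\<bar>Hfun f \<beta> (u s) i\<bar> \<le> M1 * exp (Lc * s)" "\<bar>Hfun f \<beta> (u s) i\<bar> \<le> M0"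
    "\<bar>Hfun f \<beta> (u s) i\<bar> \<le> M * exp (\<rho> * s)" if u: "u \<in> AA" for u s i
  proof -
    have F1: "u s \<in> {0..kp}" and F2: "\<And>j. 0 \<le> u s $ j"
      and F3: "\<And>j. u s $ j \<le> \<nu> Lc $ j * exp (Lc * s)" and F4: "\<And>j. u s $ j \<le> k $ j"
      using A_facts[OF u[unfolded AA_def] kkp] by auto
    have n1: "norm (u s) \<le> Nv * exp (Lc * s)"
    proof -
      have "norm (u s) \<le> (\<Sum>j\<in>UNIV. \<bar>u s $ j\<bar>)" by (rule norm_le_l1_cart)
      also have "\<dots> \<le> (\<Sum>j\<in>UNIV. \<nu> Lc $ j * exp (Lc * s))"
        using F2 F3 by (intro sum_mono) simp
      also have "\<dots> = Nv * exp (Lc * s)" by (simp add: Nv_def sum_distrib_right)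
      finally show ?thesis .
    qed
    have n0: "norm (u s) \<le> Nk"
    proof -
      have "norm (u s) \<le> (\<Sum>j\<in>UNIV. \<bar>u s $ j\<bar>)" by (rule norm_le_l1_cart)
      also have "\<dots> \<le> (\<Sum>j\<in>UNIV. \<bar>k $ j\<bar>)"
        using F2 F4 by (intro sum_mono) (smt (verit))
      finally show ?thesis by (simp add: Nk_def)
    qed
    have "CH * norm (u s) \<le> CH * (Nv * exp (Lc * s))" by (rule mult_left_mono[OF n1 CH0])
    then show a: "\<bar>Hfun f \<beta> (u s) i\<bar> \<le> M1 * exp (Lc * s)"
      using Hb[OF F1, of i] by (simp add: M1_def mult.assoc)
    have "CH * norm (u s) \<le> CH * Nk" by (rule mult_left_mono[OF n0 CH0])
    then show b: "\<bar>Hfun f \<beta> (u s) i\<bar> \<le> M0"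
      using Hb[OF F1, of i] by (simp add: M0_def)
    show "\<bar>Hfun f \<beta> (u s) i\<bar> \<le> M * exp (\<rho> * s)"
    proof (cases "s \<ge> 0")
      case True
      then have "1 \<le> exp (\<rho> * s)" using rho by simp
      then have "M \<le> M * exp (\<rho> * s)" using Mpos by (metis mult_left_mono mult.right_neutral)
      then show ?thesis using b M0M by linarith
    next
      case False
      then have "Lc * s \<le> \<rho> * s" using rho by (intro mult_right_mono_neg) auto
      then have "exp (Lc * s) \<le> exp (\<rho> * s)" by simp
      then have "M1 * exp (Lc * s) \<le> M * exp (\<rho> * s)" using M1M M10 by (intro mult_mono) auto
      then show ?thesis using a by linarith
    qed
  qed
  have hcont: "continuous_on UNIV (\<lambda>s. Hfun f \<beta> (u s) i)" if u: "u \<in> AA" for u i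
  proof -
    note F = A_facts[OF u[unfolded AA_def] kkp]
    have cu: "continuous_on UNIV u" using F(5) by (simp add: in_E_def)
    have "continuous_on UNIV (\<lambda>s. f (u s))"
      by (rule continuous_on_compose2[OF cont_f cu]) (use F(1) in auto)
    then show ?thesis unfolding Hfun_def by (intro continuous_intros cu)
  qed
  have hmeas: "(\<lambda>s. Hfun f \<beta> (u s) i) \<in> borel_measurable lborel" if "u \<in> AA" for u i
    using borel_measurable_continuous_onI[OF hcont[OF that]] by simp
  have Tcomp: "Top d f c \<beta> u \<xi> $ i = 1 / (d $ i * (lam1 d c \<beta> i + lam2 d c \<beta> i)) *
      ((LBINT s:{..\<xi>}. exp (- lam1 d c \<beta> i * (\<xi> - s)) * Hfun f \<beta> (u s) i) +
       (LBINT s:{\<xi>..}. exp (lam2 d c \<beta> i * (\<xi> - s)) * Hfun f \<beta> (u s) i))" for u \<xi> i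
    by (simp add: Top_def)
  have kpos: "1 / (d $ i * (lam1 d c \<beta> i + lam2 d c \<beta> i)) > 0" for i
    using dpos[of i] l1pos[of i] l2pos[of i] by simp
  have rho0: "0 \<le> \<rho>" and Lc0: "0 \<le> Lc" using rho Lc(1) by auto
  have rl2: "\<rho> < lam2 d c \<beta> i" "Lc < lam2 d c \<beta> i" for i
    using l1g[of i] l21[of i] rho Lc(1) by linarith+

  have partI: "in_E \<rho> (Top d f c \<beta> u)" if u: "u \<in> AA" for u
  proof -
    have hb0: "\<bar>Hfun f \<beta> (u s) i\<bar> \<le> M0 + 0 * exp (0 * s)" for s i using hbd(2)[OF u] by simp
    have hbr: "\<bar>Hfun f \<beta> (u s) i\<bar> \<le> 0 + M * exp (\<rho> * s)" for s i using hbd(3)[OF u] by simp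
    have cont: "continuous_on UNIV (Top d f c \<beta> u)"
    proof -
      have "continuous_on UNIV (\<lambda>\<xi>. Top d f c \<beta> u \<xi> $ i)" for i
        unfolding Tcomp
        by (intro continuous_intros kernel_P_cont[OF hmeas[OF u] l1pos _ _ M00 _ hb0])
           (use l2pos in auto)
      then have "continuous_on UNIV (\<lambda>\<xi>. \<chi> i. Top d f c \<beta> u \<xi> $ i)"
        by (intro continuous_on_vec_lambda)
      then show ?thesis by simp
    qed
    have bdd: "bdd_above (range (\<lambda>\<xi>. \<bar>Top d f c \<beta> u \<xi> $ i\<bar> * exp (- \<rho> * \<xi>)))" for i
    proof -
      define \<kappa> where "\<kappa> = 1 / (d $ i * (lam1 d c \<beta> i + lam2 d c \<beta> i))"
      define B where "B = 1/(lam1 d c \<beta> i + \<rho>) + 1/(lam2 d c \<beta> i - \<rho>)"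
      have "\<bar>Top d f c \<beta> u \<xi> $ i\<bar> * exp (- \<rho> * \<xi>) \<le> \<kappa> * (M * B)" for \<xi>
      proof -
        have P: "\<bar>(LBINT s:{..\<xi>}. exp (- lam1 d c \<beta> i * (\<xi> - s)) * Hfun f \<beta> (u s) i) +
            (LBINT s:{\<xi>..}. exp (lam2 d c \<beta> i * (\<xi> - s)) * Hfun f \<beta> (u s) i)\<bar> \<le> M * exp (\<rho> * \<xi>) * B"
          using kernel_P(3)[where h="\<lambda>s. Hfun f \<beta> (u s) i" and la="lam1 d c \<beta> i" and lb="lam2 d c \<beta> i" and mu=\<rho> and a=0 and b=M and \<xi>=\<xi>, OF hmeas[OF u] l1pos rho0 rl2(1) order_refl Mpos hbr]
          by (simp add: B_def)
        have kp0: "\<kappa> > 0" using kpos[of i] by (simp add: \<kappa>_def)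
        have T1: "\<bar>Top d f c \<beta> u \<xi> $ i\<bar> = \<kappa> * \<bar>(LBINT s:{..\<xi>}. exp (- lam1 d c \<beta> i * (\<xi> - s)) * Hfun f \<beta> (u s) i) +
            (LBINT s:{\<xi>..}. exp (lam2 d c \<beta> i * (\<xi> - s)) * Hfun f \<beta> (u s) i)\<bar>"
          unfolding Tcomp \<kappa>_def[symmetric] using kp0 by (simp add: abs_mult)
        have "\<bar>Top d f c \<beta> u \<xi> $ i\<bar> \<le> \<kappa> * (M * exp (\<rho> * \<xi>) * B)"
          unfolding T1 using P kp0 by (intro mult_left_mono) auto
        then have "\<bar>Top d f c \<beta> u \<xi> $ i\<bar> * exp (- \<rho> * \<xi>) \<le> (\<kappa> * (M * exp (\<rho> * \<xi>) * B)) * exp (- \<rho> * \<xi>)"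
          by (intro mult_right_mono) auto
        also have "\<dots> = \<kappa> * (M * B) * (exp (\<rho> * \<xi>) * exp (- \<rho> * \<xi>))" by (simp add: algebra_simps)
        also have "\<dots> = \<kappa> * (M * B)" by (simp flip: exp_add)
        finally show ?thesis .
      qed
      then show ?thesis by (auto simp: bdd_above_def)
    qed
    show ?thesis using cont bdd unfolding in_E_def by auto
  qed

  have partII: "\<exists>\<delta>>0. \<forall>v\<in>AA. wnorm \<rho> (\<lambda>\<xi>. v \<xi> - u \<xi>) < \<delta> \<longrightarrow>
      wnorm \<rho> (\<lambda>\<xi>. Top d f c \<beta> v \<xi> - Top d f c \<beta> u \<xi>) < \<epsilon>" if u: "u \<in> AA" and eps: "\<epsilon> > 0" for u \<epsilon>
  proof -
    define N where "N = real CARD('n)"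
    have N1: "N \<ge> 1" by (simp add: N_def Suc_le_eq)
    define \<epsilon>' where "\<epsilon>' = \<epsilon> / (2 * N)"
    have e'pos: "\<epsilon>' > 0" using eps N1 by (simp add: \<epsilon>'_def)
    have comp: "\<exists>\<delta>>0. \<forall>v\<in>AA. wnorm \<rho> (\<lambda>\<xi>. v \<xi> - u \<xi>) < \<delta> \<longrightarrow>
        (\<forall>\<xi>. \<bar>Top d f c \<beta> v \<xi> $ i - Top d f c \<beta> u \<xi> $ i\<bar> * exp (- \<rho> * \<xi>) \<le> \<epsilon>')" for i
    proof -
      define \<kappa> where "\<kappa> = 1 / (d $ i * (lam1 d c \<beta> i + lam2 d c \<beta> i))"
      define l1 where "l1 = lam1 d c \<beta> i"
      define l2 where "l2 = lam2 d c \<beta> i"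
      have kp0: "\<kappa> > 0" using kpos[of i] by (simp add: \<kappa>_def)
      have l1p: "l1 > 0" using l1pos[of i] by (simp add: l1_def)
      have rl2': "\<rho> < l2" "Lc < l2" using rl2[of i] by (simp_all add: l2_def)
      have l2p': "0 < l2" using l2pos[of i] by (simp add: l2_def)
      have Tc: "Top d f c \<beta> w \<xi> $ i = \<kappa> * ((LBINT s:{..\<xi>}. exp (- l1 * (\<xi> - s)) * Hfun f \<beta> (w s) i) +
          (LBINT s:{\<xi>..}. exp (l2 * (\<xi> - s)) * Hfun f \<beta> (w s) i))" for w \<xi>
        by (simp add: Tcomp \<kappa>_def l1_def l2_def)
      define BL where "BL = 1/(l1+Lc) + 1/(l2-Lc)"
      define A0 where "A0 = 1/l1 + 1/l2"
      define Br where "Br = 1/(l1+\<rho>) + 1/(l2-\<rho>)"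
      have A00: "A0 \<ge> 0" using l1p rl2' rho by (simp add: A0_def)
      obtain R0 where R0: "R0 \<ge> 0" "\<kappa> * (2*M1) * BL * exp (- (Lc - \<rho>) * R0) \<le> \<epsilon>'"
        using exp_small[of "Lc - \<rho>" \<epsilon>' "\<kappa> * (2*M1) * BL"] rho e'pos by auto
      obtain R where R: "R \<ge> 0" "\<kappa> * (2*M0) * Br * exp (- \<rho> * R) \<le> \<epsilon>'/2"
        using exp_small[of \<rho> "\<epsilon>'/2" "\<kappa> * (2*M0) * Br"] rho e'pos by auto
      define \<eta> where "\<eta> = \<epsilon>' / (2 * (\<kappa> * A0 * exp (\<rho> * R0) + 1))"
      have den: "\<kappa> * A0 * exp (\<rho> * R0) + 1 > 0" using kp0 A00
        by (metis add_nonneg_pos exp_ge_zero mult_nonneg_nonneg less_imp_le zero_less_one)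
      have eta: "\<eta> > 0" using e'pos den by (simp add: \<eta>_def)
      have eta0: "0 \<le> \<eta>" using eta by simp
      have eta2: "\<kappa> * \<eta> * A0 * exp (\<rho> * R0) \<le> \<epsilon>'/2"
      proof -
        have "\<kappa> * \<eta> * A0 * exp (\<rho> * R0) = (\<epsilon>'/2) * ((\<kappa> * A0 * exp (\<rho> * R0)) / (\<kappa> * A0 * exp (\<rho> * R0) + 1))"
          using den by (simp add: \<eta>_def field_simps)
        also have "\<dots> \<le> (\<epsilon>'/2) * 1" using den e'pos by (intro mult_left_mono) auto
        finally show ?thesis by simp
      qed
      have Hc: "continuous_on {0..kp} (\<lambda>w. Hfun f \<beta> w i)"
        unfolding Hfun_def by (intro continuous_intros cont_f)
      have "uniformly_continuous_on {0..kp} (\<lambda>w. Hfun f \<beta> w i)"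
        by (rule compact_uniformly_continuous[OF Hc]) (simp add: interval_cbox_cart compact_cbox)
      then have "\<exists>dd>0. \<forall>x\<in>{0..kp}. \<forall>x'\<in>{0..kp}. dist x' x < dd \<longrightarrow> dist (Hfun f \<beta> x' i) (Hfun f \<beta> x i) < \<eta>"
        unfolding uniformly_continuous_on_def using eta by blast
      then obtain du where du: "du > 0"
        "\<And>x x'. x\<in>{0..kp} \<Longrightarrow> x'\<in>{0..kp} \<Longrightarrow> dist x' x < du \<Longrightarrow> \<bar>Hfun f \<beta> x' i - Hfun f \<beta> x i\<bar> < \<eta>"
        by (auto simp: dist_real_def)
      define \<delta> where "\<delta> = du / (N * exp (\<rho> * R))"
      have dpos': "\<delta> > 0" using du N1 by (simp add: \<delta>_def)
      show ?thesis
      proof (intro exI[of _ \<delta>] conjI ballI impI allI)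
        show "\<delta> > 0" by (rule dpos')
        fix v \<xi> assume v: "v \<in> AA" and wn: "wnorm \<rho> (\<lambda>\<xi>. v \<xi> - u \<xi>) < \<delta>"
        note Fu = A_facts[OF u[unfolded AA_def] kkp] and Fv = A_facts[OF v[unfolded AA_def] kkp]
        define D where "D s = Hfun f \<beta> (v s) i - Hfun f \<beta> (u s) i" for s
        have cw: "\<bar>v s $ j - u s $ j\<bar> < \<delta> * exp (\<rho> * s)" for s j
        proof -
          have "\<bar>v s $ j - u s $ j\<bar> * exp (- \<rho> * s) < \<delta>"
            using wnorm_comp_le[OF Fu(5) Fv(5), of s j] wn by linarith
          then have "\<bar>v s $ j - u s $ j\<bar> * exp (- \<rho> * s) * exp (\<rho> * s) < \<delta> * exp (\<rho> * s)"
            by (intro mult_strict_right_mono) auto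
          then show ?thesis by (simp add: mult.assoc flip: exp_add)
        qed
        have Dsmall: "\<bar>D s\<bar> < \<eta>" if "s \<le> R" for s
        proof -
          have "norm (v s - u s) \<le> (\<Sum>j\<in>UNIV. \<bar>(v s - u s) $ j\<bar>)" by (rule norm_le_l1_cart)
          also have "\<dots> < (\<Sum>j\<in>(UNIV::'n set). \<delta> * exp (\<rho> * s))"
            by (intro sum_strict_mono_ex1) (auto simp: cw less_imp_le)
          also have "\<dots> = N * \<delta> * exp (\<rho> * s)" by (simp add: N_def)
          also have "\<dots> \<le> N * \<delta> * exp (\<rho> * R)"
            using that rho N1 dpos' by (intro mult_left_mono) auto
          also have "\<dots> = du" using N1 by (simp add: \<delta>_def)
          finally have "dist (v s) (u s) < du" by (simp add: dist_norm)
          then show ?thesis using du(2)[OF Fu(1) Fv(1)] by (simp add: D_def)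
        qed
        have DM0: "\<bar>D s\<bar> \<le> 2 * M0" for s using hbd(2)[OF u, of s i] hbd(2)[OF v, of s i]
          unfolding D_def by linarith
        have Db2: "\<bar>D s\<bar> \<le> 0 + (2 * M1) * exp (Lc * s)" for s using hbd(1)[OF u, of s i] hbd(1)[OF v, of s i]
          unfolding D_def by linarith
        have Db1: "\<bar>D s\<bar> \<le> \<eta> + (2 * M0 * exp (- \<rho> * R)) * exp (\<rho> * s)" for s
        proof (cases "s \<le> R")
          case True
          have "0 \<le> (2 * M0 * exp (- \<rho> * R)) * exp (\<rho> * s)" using M00 by simp
          then show ?thesis using Dsmall[OF True] by linarith
        next
          case False
          have "1 \<le> exp (\<rho> * (s - R))" using False rho by simp
          also have "exp (\<rho> * (s - R)) = exp (- \<rho> * R) * exp (\<rho> * s)" by (simp add: algebra_simps flip: exp_add)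
          finally have "2 * M0 \<le> 2 * M0 * (exp (- \<rho> * R) * exp (\<rho> * s))" using M00
            by (metis mult_left_mono mult.right_neutral mult_nonneg_nonneg zero_le_numeral)
          then show ?thesis using DM0[of s] eta by (simp add: mult.assoc)
        qed
        have Dmeas: "D \<in> borel_measurable lborel" unfolding D_def[abs_def]
          using hmeas[OF v, of i] hmeas[OF u, of i] by measurable
        have hb0: "\<bar>Hfun f \<beta> (w s) i\<bar> \<le> M0 + 0 * exp (0 * s)" if "w \<in> AA" for w s
          using hbd(2)[OF that] by simp
        note Iu = kernel_P[where h="\<lambda>s. Hfun f \<beta> (u s) i" and la=l1 and lb=l2 and mu=0 and a=M0 and b=0 and \<xi>=\<xi>, OF hmeas[OF u] l1p order_refl l2p' M00 order_refl hb0[OF u]]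
        note Iv = kernel_P[where h="\<lambda>s. Hfun f \<beta> (v s) i" and la=l1 and lb=l2 and mu=0 and a=M0 and b=0 and \<xi>=\<xi>, OF hmeas[OF v] l1p order_refl l2p' M00 order_refl hb0[OF v]]
        have Iu1: "set_integrable lborel {..\<xi>} (\<lambda>s. exp (- l1 * (\<xi> - s)) * Hfun f \<beta> (u s) i)"
          and Iu2: "set_integrable lborel {\<xi>..} (\<lambda>s. exp (l2 * (\<xi> - s)) * Hfun f \<beta> (u s) i)"
          using Iu rl2' rho by auto
        have Iv1: "set_integrable lborel {..\<xi>} (\<lambda>s. exp (- l1 * (\<xi> - s)) * Hfun f \<beta> (v s) i)"
          and Iv2: "set_integrable lborel {\<xi>..} (\<lambda>s. exp (l2 * (\<xi> - s)) * Hfun f \<beta> (v s) i)"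
          using Iv rl2' rho by auto
        have eqf1: "(\<lambda>s. exp (- l1 * (\<xi> - s)) * D s) = (\<lambda>s. exp (- l1 * (\<xi> - s)) * Hfun f \<beta> (v s) i - exp (- l1 * (\<xi> - s)) * Hfun f \<beta> (u s) i)"
          by (simp add: D_def fun_eq_iff right_diff_distrib)
        have eqf2: "(\<lambda>s. exp (l2 * (\<xi> - s)) * D s) = (\<lambda>s. exp (l2 * (\<xi> - s)) * Hfun f \<beta> (v s) i - exp (l2 * (\<xi> - s)) * Hfun f \<beta> (u s) i)"
          by (simp add: D_def fun_eq_iff right_diff_distrib)
        have eL: "(LBINT s:{..\<xi>}. exp (- l1 * (\<xi> - s)) * D s) =
            (LBINT s:{..\<xi>}. exp (- l1 * (\<xi> - s)) * Hfun f \<beta> (v s) i) - (LBINT s:{..\<xi>}. exp (- l1 * (\<xi> - s)) * Hfun f \<beta> (u s) i)"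
          unfolding eqf1 by (rule set_integral_diff(2)[OF Iv1 Iu1])
        have eR: "(LBINT s:{\<xi>..}. exp (l2 * (\<xi> - s)) * D s) =
            (LBINT s:{\<xi>..}. exp (l2 * (\<xi> - s)) * Hfun f \<beta> (v s) i) - (LBINT s:{\<xi>..}. exp (l2 * (\<xi> - s)) * Hfun f \<beta> (u s) i)"
          unfolding eqf2 by (rule set_integral_diff(2)[OF Iv2 Iu2])
        have diffeq: "\<bar>Top d f c \<beta> v \<xi> $ i - Top d f c \<beta> u \<xi> $ i\<bar> =
            \<kappa> * \<bar>(LBINT s:{..\<xi>}. exp (- l1 * (\<xi> - s)) * D s) + (LBINT s:{\<xi>..}. exp (l2 * (\<xi> - s)) * D s)\<bar>"
        proof -
          have "Top d f c \<beta> v \<xi> $ i - Top d f c \<beta> u \<xi> $ i =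
            \<kappa> * ((LBINT s:{..\<xi>}. exp (- l1 * (\<xi> - s)) * D s) + (LBINT s:{\<xi>..}. exp (l2 * (\<xi> - s)) * D s))"
            unfolding Tc eL eR by (simp add: algebra_simps)
          then show ?thesis using kp0 by (simp add: abs_mult)
        qed
        show "\<bar>Top d f c \<beta> v \<xi> $ i - Top d f c \<beta> u \<xi> $ i\<bar> * exp (- \<rho> * \<xi>) \<le> \<epsilon>'"
        proof (cases "\<xi> \<le> - R0")
          case True
          have M12: "0 \<le> 2 * M1" using M10 by simp
          have P: "\<bar>(LBINT s:{..\<xi>}. exp (- l1 * (\<xi> - s)) * D s) + (LBINT s:{\<xi>..}. exp (l2 * (\<xi> - s)) * D s)\<bar>
              \<le> 2 * M1 * exp (Lc * \<xi>) * BL"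
            using kernel_P(3)[where h=D and la=l1 and lb=l2 and mu=Lc and a=0 and b="2*M1" and \<xi>=\<xi>, OF Dmeas l1p Lc0 rl2'(2) order_refl M12 Db2]
            by (simp add: BL_def)
          have "(Lc - \<rho>) * \<xi> \<le> (Lc - \<rho>) * (- R0)" using True rho by (intro mult_left_mono) auto
          then have ex: "exp (Lc * \<xi>) * exp (- \<rho> * \<xi>) \<le> exp (- (Lc - \<rho>) * R0)"
            by (simp add: algebra_simps flip: exp_add)
          have BL0: "BL \<ge> 0" using l1p rl2' Lc(1) by (simp add: BL_def)
          have "\<bar>Top d f c \<beta> v \<xi> $ i - Top d f c \<beta> u \<xi> $ i\<bar> * exp (- \<rho> * \<xi>)
              \<le> \<kappa> * (2 * M1 * exp (Lc * \<xi>) * BL) * exp (- \<rho> * \<xi>)"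
            unfolding diffeq by (rule mult_right_mono[OF mult_left_mono[OF P less_imp_le[OF kp0]] exp_ge_zero])
          also have "\<dots> = \<kappa> * (2 * M1) * BL * (exp (Lc * \<xi>) * exp (- \<rho> * \<xi>))" by (simp add: algebra_simps)
          also have "\<dots> \<le> \<kappa> * (2 * M1) * BL * exp (- (Lc - \<rho>) * R0)"
            using ex kp0 M10 BL0 by (intro mult_left_mono) auto
          also have "\<dots> \<le> \<epsilon>'" by (rule R0(2))
          finally show ?thesis .
        next
          case False
          have M02: "0 \<le> 2 * M0 * exp (- \<rho> * R)" using M00 by simp
          have P: "\<bar>(LBINT s:{..\<xi>}. exp (- l1 * (\<xi> - s)) * D s) + (LBINT s:{\<xi>..}. exp (l2 * (\<xi> - s)) * D s)\<bar>
              \<le> \<eta> * A0 + 2 * M0 * exp (- \<rho> * R) * exp (\<rho> * \<xi>) * Br"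
            using kernel_P(3)[where h=D and la=l1 and lb=l2 and mu=\<rho> and a=\<eta> and b="2 * M0 * exp (- \<rho> * R)" and \<xi>=\<xi>, OF Dmeas l1p rho0 rl2'(1) eta0 M02 Db1]
            by (simp add: A0_def Br_def)
          have "\<rho> * (- R0) \<le> \<rho> * \<xi>" using False rho by (intro mult_left_mono) auto
          then have ex: "exp (- \<rho> * \<xi>) \<le> exp (\<rho> * R0)" by simp
          have Br0: "Br \<ge> 0" using l1p rl2' rho by (simp add: Br_def)
          have "\<bar>Top d f c \<beta> v \<xi> $ i - Top d f c \<beta> u \<xi> $ i\<bar> * exp (- \<rho> * \<xi>)
              \<le> \<kappa> * (\<eta> * A0 + 2 * M0 * exp (- \<rho> * R) * exp (\<rho> * \<xi>) * Br) * exp (- \<rho> * \<xi>)"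
            unfolding diffeq by (rule mult_right_mono[OF mult_left_mono[OF P less_imp_le[OF kp0]] exp_ge_zero])
          also have "\<dots> = \<kappa> * \<eta> * A0 * exp (- \<rho> * \<xi>) + \<kappa> * (2 * M0) * Br * exp (- \<rho> * R) * (exp (\<rho> * \<xi>) * exp (- \<rho> * \<xi>))"
            by (simp add: algebra_simps)
          also have "\<dots> = \<kappa> * \<eta> * A0 * exp (- \<rho> * \<xi>) + \<kappa> * (2 * M0) * Br * exp (- \<rho> * R)"
            by (simp flip: exp_add)
          also have "\<dots> \<le> \<kappa> * \<eta> * A0 * exp (\<rho> * R0) + \<epsilon>'/2"
            using ex kp0 eta A00 R(2) by (intro add_mono mult_left_mono) auto
          also have "\<dots> \<le> \<epsilon>'" using eta2 by linarith
          finally show ?thesis .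
        qed
      qed
    qed
    obtain \<delta>f where \<delta>f0: "\<forall>i. \<delta>f i > 0 \<and> (\<forall>v\<in>AA. wnorm \<rho> (\<lambda>\<xi>. v \<xi> - u \<xi>) < \<delta>f i \<longrightarrow>
        (\<forall>\<xi>. \<bar>Top d f c \<beta> v \<xi> $ i - Top d f c \<beta> u \<xi> $ i\<bar> * exp (- \<rho> * \<xi>) \<le> \<epsilon>'))"
      using choice[OF allI[of "\<lambda>i. \<exists>\<delta>. \<delta> > 0 \<and> (\<forall>v\<in>AA. wnorm \<rho> (\<lambda>\<xi>. v \<xi> - u \<xi>) < \<delta> \<longrightarrow>
        (\<forall>\<xi>. \<bar>Top d f c \<beta> v \<xi> $ i - Top d f c \<beta> u \<xi> $ i\<bar> * exp (- \<rho> * \<xi>) \<le> \<epsilon>'))", OF comp]] by blast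
    have \<delta>f: "\<And>i. \<delta>f i > 0"
      "\<And>i. \<forall>v\<in>AA. wnorm \<rho> (\<lambda>\<xi>. v \<xi> - u \<xi>) < \<delta>f i \<longrightarrow>
        (\<forall>\<xi>. \<bar>Top d f c \<beta> v \<xi> $ i - Top d f c \<beta> u \<xi> $ i\<bar> * exp (- \<rho> * \<xi>) \<le> \<epsilon>')"
      using \<delta>f0 by blast+
    define \<delta>0 where "\<delta>0 = Min (range \<delta>f)"
    have d0: "\<delta>0 > 0" using \<delta>f(1) by (simp add: \<delta>0_def)
    have d0le: "\<delta>0 \<le> \<delta>f i" for i by (simp add: \<delta>0_def)
    show ?thesis
    proof (intro exI[of _ \<delta>0] conjI ballI impI)
      show "\<delta>0 > 0" by (rule d0)
      fix v assume v: "v \<in> AA" and wn: "wnorm \<rho> (\<lambda>\<xi>. v \<xi> - u \<xi>) < \<delta>0"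
      have each: "\<bar>Top d f c \<beta> v \<xi> $ i - Top d f c \<beta> u \<xi> $ i\<bar> * exp (- \<rho> * \<xi>) \<le> \<epsilon>'" for \<xi> i
        using \<delta>f(2)[of i] d0le[of i] v wn by auto
      have "wnorm \<rho> (\<lambda>\<xi>. Top d f c \<beta> v \<xi> - Top d f c \<beta> u \<xi>) \<le> (\<Sum>i\<in>(UNIV::'n set). \<epsilon>')"
        unfolding wnorm_def vector_minus_component by (intro sum_mono cSUP_least each) auto
      also have "\<dots> = N * \<epsilon>'" by (simp add: N_def)
      also have "\<dots> = \<epsilon> / 2" using N1 by (simp add: \<epsilon>'_def)
      also have "\<dots> < \<epsilon>" using eps by simp
      finally show "wnorm \<rho> (\<lambda>\<xi>. Top d f c \<beta> v \<xi> - Top d f c \<beta> u \<xi>) < \<epsilon>" .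
    qed
  qed
  show ?thesis using partI partII unfolding AA_def by blast
qed


end
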